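(* The Jahangir graph $J_{2,3}$ is not greedy. Concretely, label $J_{2,3}$ as the 6-cycle $v_1v_2v_3v_4v_5v_6v_1$ together with a vertex $v_7$ adjacent to $v_1,v_3,v_5$. Then $f(J_{2,3})=8$, and for the distribution with $p(v_2)=p(v_6)=3$, $p(v_1)=p(v_7)=1$ and $p(v_3)=p(v_4)=p(v_5)=0$ (8 pebbles in total), no sequence of greedy pebbling moves with respect to the root $v_4$ places a pebble on $v_4$.
   Context: A pebbling distribution on a graph $G$ assigns a nonnegative integer number of pebbles to each vertex. A pebbling move removes two pebbles from a vertex and places one pebble on an adjacent vertex. The pebbling number $f(G)$ is the least $p$ such that, for every distribution of $p$ pebbles and every vertex $w$, some sequence of pebbling moves places a pebble on $w$. For the Jahangir graph $J_{n,m}$ ($m\ge 3$): it has $nm+1$ vertices, namely a cycle $C_{nm}$ plus one extra vertex adjacent to $m$ vertices of the cycle that are consecutively at distance $n$ from each other along the cycle. Given a root $w$, a pebbling move from $u$ to $v$ is greedy if $\mathrm{dist}(v,w)<\mathrm{dist}(u,w)$. A graph $G$ is greedy if, from every distribution of $f(G)$ pebbles and for every root $w$, one pebble can be moved to $w$ using only greedy pebbling moves. *)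

theory Defs
  imports Main
begin

text \<open>Graphs are given by a vertex set V and a symmetric adjacency relation E.
  A pebbling distribution is a function from vertices to nat, zero outside V.\<close>

definition supported :: "'a set \<Rightarrow> ('a \<Rightarrow> nat) \<Rightarrow> bool" where
  "supported V p \<longleftrightarrow> (\<forall>x. x \<notin> V \<longrightarrow> p x = 0)"

definition pebble_move :: "('a \<Rightarrow> 'a \<Rightarrow> bool) \<Rightarrow> ('a \<Rightarrow> nat) \<Rightarrow> ('a \<Rightarrow> nat) \<Rightarrow> bool" where
  "pebble_move E p q \<longleftrightarrow>
     (\<exists>u v. E u v \<and> 2 \<le> p u \<and> q = p(u := p u - 2, v := p v + 1))"

definition gdist :: "('a \<Rightarrow> 'a \<Rightarrow> bool) \<Rightarrow> 'a \<Rightarrow> 'a \<Rightarrow> nat" where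
  "gdist E u v = (LEAST k. (E ^^ k) u v)"

definition greedy_move :: "('a \<Rightarrow> 'a \<Rightarrow> bool) \<Rightarrow> 'a \<Rightarrow> ('a \<Rightarrow> nat) \<Rightarrow> ('a \<Rightarrow> nat) \<Rightarrow> bool" where
  "greedy_move E w p q \<longleftrightarrow>
     (\<exists>u v. E u v \<and> gdist E v w < gdist E u w \<and> 2 \<le> p u
            \<and> q = p(u := p u - 2, v := p v + 1))"

definition pebbling_number :: "'a set \<Rightarrow> ('a \<Rightarrow> 'a \<Rightarrow> bool) \<Rightarrow> nat" where
  "pebbling_number V E = (LEAST k. \<forall>p. supported V p \<longrightarrow> sum p V = k \<longrightarrow>
       (\<forall>w\<in>V. \<exists>q. (pebble_move E)\<^sup>*\<^sup>* p q \<and> 1 \<le> q w))"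

definition greedy :: "'a set \<Rightarrow> ('a \<Rightarrow> 'a \<Rightarrow> bool) \<Rightarrow> bool" where
  "greedy V E \<longleftrightarrow> (\<forall>p. supported V p \<longrightarrow> sum p V = pebbling_number V E \<longrightarrow>
       (\<forall>w\<in>V. \<exists>q. (greedy_move E w)\<^sup>*\<^sup>* p q \<and> 1 \<le> q w))"

text \<open>Jahangir graph J_{n,m}: cycle vertices 0..nm-1 (in cyclic order), center nm,
  adjacent to the cycle vertices 0, n, 2n, ..., (m-1)n.\<close>
definition jahangir_V :: "nat \<Rightarrow> nat \<Rightarrow> nat set" where
  "jahangir_V n m = {..n*m}"

definition jahangir_E :: "nat \<Rightarrow> nat \<Rightarrow> nat \<Rightarrow> nat \<Rightarrow> bool" where
  "jahangir_E n m u v \<longleftrightarrow>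
     (u < n*m \<and> v < n*m \<and> (v = Suc u mod (n*m) \<or> u = Suc v mod (n*m)))
   \<or> (u = n*m \<and> v < n*m \<and> n dvd v)
   \<or> (v = n*m \<and> u < n*m \<and> n dvd u)"

end

theory Submission
  imports Defs
begin

abbreviation "EJ \<equiv> jahangir_E 2 3"

definition edgeL :: "(nat \<times> nat) list" where
"edgeL = [(0, 1), (0, 5), (0, 6), (1, 0), (1, 2), (2, 1), (2, 3), (2, 6), (3, 2), (3, 4), (4, 3), (4, 5), (4, 6), (5, 0), (5, 4), (6, 0), (6, 2), (6, 4)]"

lemma le6: "(u::nat) \<le> 6 \<Longrightarrow> u = 0 \<or> u = 1 \<or> u = 2 \<or> u = 3 \<or> u = 4 \<or> u = 5 \<or> u = 6"
  by auto

lemma EJ_simp: "EJ u v \<longleftrightarrow> (u<6 \<and> v<6 \<and> (v = Suc u mod 6 \<or> u = Suc v mod 6)) \<or> (u=6 \<and> v<6 \<and> even v) \<or> (v=6 \<and> u<6 \<and> even u)"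
  unfolding jahangir_E_def by simp

lemma edge_iff: "EJ u v \<longleftrightarrow> (u,v) \<in> set edgeL"
proof -
  have b1: "EJ u v \<Longrightarrow> u \<le> 6 \<and> v \<le> 6" unfolding EJ_simp by auto
  have b2: "(u,v) \<in> set edgeL \<Longrightarrow> u \<le> 6 \<and> v \<le> 6" unfolding edgeL_def by auto
  show ?thesis
  proof (cases "u \<le> 6 \<and> v \<le> 6")
    case True
    then have "u = 0 \<or> u = 1 \<or> u = 2 \<or> u = 3 \<or> u = 4 \<or> u = 5 \<or> u = 6"
      "v = 0 \<or> v = 1 \<or> v = 2 \<or> v = 3 \<or> v = 4 \<or> v = 5 \<or> v = 6" using le6 by auto
    then show ?thesis unfolding EJ_simp edgeL_def by (elim disjE) simp_all
  next
    case False
    then show ?thesis using b1 b2 by blast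
  qed
qed
definition mvs :: "nat \<Rightarrow> (nat \<times> nat) list" where
"mvs w = (if w = 0 then [(1,0), (5,0), (6,0), (2,1), (2,6), (4,5), (4,6), (3,2), (3,4), (0,1), (0,5), (0,6), (1,2), (5,4), (6,2), (6,4), (2,3), (4,3)]
 else if w = 1 then [(0,1), (2,1), (3,2), (5,0), (6,0), (6,2), (4,3), (4,5), (4,6), (1,0), (1,2), (0,5), (0,6), (2,3), (2,6), (3,4), (5,4), (6,4)]
 else if w = 2 then [(1,2), (3,2), (6,2), (0,1), (0,6), (4,3), (4,6), (5,4), (5,0), (2,1), (2,3), (2,6), (1,0), (3,4), (6,0), (6,4), (0,5), (4,5)]
 else if w = 3 then [(2,3), (4,3), (1,2), (5,4), (6,2), (6,4), (0,1), (0,5), (0,6), (3,2), (3,4), (2,1), (2,6), (4,5), (4,6), (1,0), (5,0), (6,0)]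
 else if w = 4 then [(3,4), (5,4), (6,4), (0,5), (0,6), (2,3), (2,6), (1,0), (1,2), (4,3), (4,5), (4,6), (3,2), (5,0), (6,0), (6,2), (0,1), (2,1)]
 else if w = 5 then [(0,5), (4,5), (1,0), (3,4), (6,0), (6,4), (2,1), (2,3), (2,6), (5,4), (5,0), (0,1), (0,6), (4,3), (4,6), (1,2), (3,2), (6,2)]
 else [(0,6), (2,6), (4,6), (1,0), (1,2), (3,2), (3,4), (5,4), (5,0), (6,0), (6,2), (6,4), (0,1), (0,5), (2,1), (2,3), (4,3), (4,5)])"

function reach :: "nat \<Rightarrow> nat list \<Rightarrow> nat \<Rightarrow> bool"
  and tryms :: "nat \<Rightarrow> (nat \<times> nat) list \<Rightarrow> nat list \<Rightarrow> nat \<Rightarrow> bool" where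
"reach f l w = (if 1 \<le> l!w then True else (case f of 0 \<Rightarrow> False | Suc g \<Rightarrow> tryms g (mvs w) l w))"
| "tryms g [] l w = False"
| "tryms g ((u,v)#ms) l w = (if 2 \<le> l!u then (if reach g (l[u := l!u - 2, v := l!v + 1]) w then True else tryms g ms l w) else tryms g ms l w)"
  by pat_completeness auto
termination
  by (relation "measures [\<lambda>x. case x of Inl (f,_) \<Rightarrow> 2*f | Inr (g,_) \<Rightarrow> 2*g+1,
                            \<lambda>x. case x of Inl _ \<Rightarrow> 0 | Inr (_,ms,_) \<Rightarrow> length ms]") auto

declare reach.simps[simp del] tryms.simps[simp del]

fun chk :: "nat \<Rightarrow> nat \<Rightarrow> nat list \<Rightarrow> bool" where
"chk n 0 pre = (if n = 0 then list_all (\<lambda>w. reach 7 pre w) [0..<7] else True)"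
| "chk n (Suc k) pre = list_all (\<lambda>i. chk (n - i) k (i # pre)) [0..<Suc n]"

lemma c0: "chk 8 6 [0]" by code_simp
lemma c1: "chk 7 6 [1]" by code_simp
lemma c2: "chk 6 6 [2]" by code_simp
lemma c3: "chk 5 6 [3]" by code_simp
lemma c4: "chk 4 6 [4]" by code_simp
lemma c5: "chk 3 6 [5]" by code_simp
lemma c6: "chk 2 6 [6]" by code_simp
lemma c7: "chk 1 6 [7]" by code_simp
lemma c8: "chk 0 6 [8]" by code_simp

definition dd :: "nat \<Rightarrow> nat" where
"dd x = (if x = 0 then 3 else if x = 1 \<or> x = 5 \<or> x = 6 then 2 else if x = 2 \<or> x = 4 then 1 else 0)"

lemma dd_lip: "EJ u v \<Longrightarrow> dd u \<le> dd v + 1"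
  unfolding edge_iff edgeL_def dd_def by auto

lemma dd_lower: "(EJ ^^ k) u 3 \<Longrightarrow> dd u \<le> k"
proof (induction k arbitrary: u)
  case 0
  then show ?case by (simp add: dd_def)
next
  case (Suc k)
  then obtain y where "EJ u y" "(EJ ^^ k) y 3" by (blast dest: relpowp_Suc_D2)
  then show ?case using Suc.IH dd_lip by fastforce
qed

lemma E': "(u,v) \<in> set edgeL \<Longrightarrow> EJ u v" using edge_iff by blast

lemma dd_path: "u \<le> 6 \<Longrightarrow> (EJ ^^ dd u) u 3"
proof -
  have r: "(EJ ^^ 0) 3 3" by simp
  have p2: "(EJ ^^ 1) 2 3" using relpowp_Suc_I2[OF E' r, of 2] by (simp add: edgeL_def)
  have p4: "(EJ ^^ 1) 4 3" using relpowp_Suc_I2[OF E' r, of 4] by (simp add: edgeL_def)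
  have p1: "(EJ ^^ 2) 1 3" using relpowp_Suc_I2[OF E' p2, of 1] by (simp add: edgeL_def numeral_2_eq_2)
  have p5: "(EJ ^^ 2) 5 3" using relpowp_Suc_I2[OF E' p4, of 5] by (simp add: edgeL_def numeral_2_eq_2)
  have p6: "(EJ ^^ 2) 6 3" using relpowp_Suc_I2[OF E' p4, of 6] by (simp add: edgeL_def numeral_2_eq_2)
  have p0: "(EJ ^^ 3) 0 3" using relpowp_Suc_I2[OF E' p1, of 0] by (simp add: edgeL_def numeral_3_eq_3 numeral_2_eq_2)
  assume "u \<le> 6"
  then show ?thesis using le6[of u] p0 p1 p2 p4 p5 p6 r by (auto simp: dd_def)
qed

lemma gdist3: "u \<le> 6 \<Longrightarrow> gdist EJ u 3 = dd u"
  unfolding gdist_def by (rule Least_equality) (auto intro: dd_path dd_lower)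

lemma edge_le6: "EJ u v \<Longrightarrow> u \<le> 6 \<and> v \<le> 6" unfolding EJ_simp by auto

definition Inv :: "(nat \<Rightarrow> nat) \<Rightarrow> bool" where
"Inv q \<longleftrightarrow> q 0 = 1 \<and> q 3 = 0 \<and> q 6 = 1 \<and> ((q 1 = 3 \<and> q 2 = 0) \<or> (q 1 = 1 \<and> q 2 = 1))
   \<and> ((q 5 = 3 \<and> q 4 = 0) \<or> (q 5 = 1 \<and> q 4 = 1))"

lemma Inv_step: "greedy_move EJ 3 q q' \<Longrightarrow> Inv q \<Longrightarrow> Inv q'"
proof -
  assume g: "greedy_move EJ 3 q q'" and i: "Inv q"
  then obtain u v where e: "EJ u v" and d: "gdist EJ v 3 < gdist EJ u 3" and t: "2 \<le> q u"
    and q': "q' = q(u := q u - 2, v := q v + 1)" unfolding greedy_move_def by blast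
  have d': "dd v < dd u" using d edge_le6[OF e] gdist3 by simp
  have "(u,v) \<in> set edgeL" using e edge_iff by blast
  then show ?thesis using d' t i unfolding q'
    by (simp only: edgeL_def set_simps insert_iff empty_iff prod.inject) (elim disjE conjE; auto simp: Inv_def dd_def)
qed

lemma greedy_part:
  assumes "D = (\<lambda>x. 0)(1 := 3, 5 := 3, 0 := 1, 6 := 1)"
  shows "\<not> (\<exists>q. (greedy_move EJ 3)\<^sup>*\<^sup>* D q \<and> 1 \<le> q 3)"
proof
  assume "\<exists>q. (greedy_move EJ 3)\<^sup>*\<^sup>* D q \<and> 1 \<le> q 3"
  then obtain q where r: "(greedy_move EJ 3)\<^sup>*\<^sup>* D q" and "1 \<le> q 3" by blast
  have "Inv D" using assms by (simp add: Inv_def)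
  have "Inv q" using r \<open>Inv D\<close> by (induction rule: rtranclp_induct) (simp, metis Inv_step)
  then show False using \<open>1 \<le> q 3\<close> by (simp add: Inv_def)
qed

definition W :: "(nat \<Rightarrow> nat) \<Rightarrow> nat" where
"W q = q 0 + 2*q 1 + 4*q 2 + 8*q 3 + 4*q 4 + 2*q 5 + 2*q 6"

lemma W_step: "pebble_move EJ q q' \<Longrightarrow> W q' \<le> W q"
proof -
  assume "pebble_move EJ q q'"
  then obtain u v where e: "EJ u v" and t: "2 \<le> q u"
    and q': "q' = q(u := q u - 2, v := q v + 1)" unfolding pebble_move_def by blast
  have "(u,v) \<in> set edgeL" using e edge_iff by blast
  then show ?thesis using t unfolding q' edgeL_def W_def by (simp only: set_simps insert_iff empty_iff prod.inject) (elim disjE conjE; simp)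
qed

lemma lower: "k < 8 \<Longrightarrow> \<not> (\<forall>p. supported (jahangir_V 2 3) p \<longrightarrow> sum p (jahangir_V 2 3) = k \<longrightarrow>
       (\<forall>w\<in>jahangir_V 2 3. \<exists>q. (pebble_move EJ)\<^sup>*\<^sup>* p q \<and> 1 \<le> q w))"
proof
  assume k: "k < 8" and H: "\<forall>p. supported (jahangir_V 2 3) p \<longrightarrow> sum p (jahangir_V 2 3) = k \<longrightarrow>
       (\<forall>w\<in>jahangir_V 2 3. \<exists>q. (pebble_move EJ)\<^sup>*\<^sup>* p q \<and> 1 \<le> q w)"
  define p :: "nat \<Rightarrow> nat" where "p = (\<lambda>x. if x = 0 then k else 0)"
  have s: "supported (jahangir_V 2 3) p" by (simp add: supported_def p_def jahangir_V_def)
  have sm: "sum p (jahangir_V 2 3) = k" unfolding p_def jahangir_V_def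
    by (simp add: sum.delta)
  have "\<forall>w\<in>jahangir_V 2 3. \<exists>q. (pebble_move EJ)\<^sup>*\<^sup>* p q \<and> 1 \<le> q w"
    using H s sm by blast
  moreover have "(3::nat) \<in> jahangir_V 2 3" by (simp add: jahangir_V_def)
  ultimately obtain q where r: "(pebble_move EJ)\<^sup>*\<^sup>* p q" and "1 \<le> q 3"
    by blast
  have "W q \<le> W p" using r by (induction rule: rtranclp_induct) (simp, metis W_step order_trans)
  moreover have "W p = k" by (simp add: W_def p_def)
  moreover have "8 \<le> W q" using \<open>1 \<le> q 3\<close> by (simp add: W_def)
  ultimately show False using k by simp
qed


lemma mvs_ok: "set (mvs w) \<subseteq> set edgeL"
  unfolding mvs_def edgeL_def by simp

definition tf :: "nat list \<Rightarrow> nat \<Rightarrow> nat" where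
"tf l = (\<lambda>x. if x < 7 then l!x else 0)"

lemma step_ok:
  assumes e: "(u,v) \<in> set edgeL" and len: "length l = 7" and t: "2 \<le> l!u"
  shows "pebble_move EJ (tf l) (tf (l[u := l!u - 2, v := l!v + 1]))"
proof -
  have uv: "u < 7" "v < 7" "u \<noteq> v" using e unfolding edgeL_def by auto
  show ?thesis unfolding pebble_move_def
  proof (intro exI conjI)
    show "EJ u v" using E'[OF e] .
    show "2 \<le> tf l u" using t uv by (simp add: tf_def)
    show "tf (l[u := l ! u - 2, v := l ! v + 1]) = (tf l)(u := tf l u - 2, v := tf l v + 1)"
      using uv len by (auto simp: tf_def nth_list_update)
  qed
qed

lemma sound:
  "reach f l w \<Longrightarrow> length l = 7 \<Longrightarrow> w < 7 \<Longrightarrow> \<exists>q. (pebble_move EJ)\<^sup>*\<^sup>* (tf l) q \<and> 1 \<le> q w"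
  "tryms g ms l w \<Longrightarrow> length l = 7 \<Longrightarrow> w < 7 \<Longrightarrow> set ms \<subseteq> set edgeL \<Longrightarrow>
     \<exists>q. (pebble_move EJ)\<^sup>*\<^sup>* (tf l) q \<and> 1 \<le> q w"
proof (induction f l w and g ms l w rule: reach_tryms.induct)
  case (1 f l w)
  show ?case
  proof (cases "1 \<le> l!w")
    case True
    then show ?thesis using 1 by (intro exI[of _ "tf l"]) (auto simp: tf_def)
  next
    case False
    obtain g where f: "f = Suc g" using 1(2) False by (cases f) (auto simp: reach.simps)
    have t: "tryms g (mvs w) l w" using 1(2) False f by (simp add: reach.simps)
    show ?thesis using 1(1)[OF False f t] 1(3,4) mvs_ok by blast
  qed
next
  case (2 g l w)
  then show ?case by (simp add: tryms.simps)
next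
  case (3 g u v ms l w)
  let ?l' = "l[u := l!u - 2, v := l!v + 1]"
  have uv: "(u,v) \<in> set edgeL" "set ms \<subseteq> set edgeL" using 3 by auto
  show ?case
  proof (cases "2 \<le> l!u \<and> reach g ?l' w")
    case True
    then obtain q where rq: "(pebble_move EJ)\<^sup>*\<^sup>* (tf ?l') q" "1 \<le> q w"
      using 3(1) 3(5,6,7) True by auto
    have "pebble_move EJ (tf l) (tf ?l')" using step_ok[OF uv(1) 3(5)] True by blast
    then show ?thesis using rq converse_rtranclp_into_rtranclp by metis
  next
    case False
    then have "tryms g ms l w" using 3(4) by (auto simp: tryms.simps split: if_splits)
    then show ?thesis using 3(2,3) 3(5,6,7) uv False by (cases "2 \<le> l!u") auto
  qed
qed

lemma chk_ok: "chk n k pre \<Longrightarrow> length l = k \<Longrightarrow> sum_list l = n \<Longrightarrow>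
   list_all (\<lambda>w. reach 7 (rev l @ pre) w) [0..<7]"
proof (induction l arbitrary: n k pre)
  case Nil
  then show ?case by simp
next
  case (Cons i l)
  then obtain k' where k: "k = Suc k'" by (cases k) auto
  have "i \<in> set [0..<Suc n]" using Cons.prems by auto
  moreover have "list_all (\<lambda>i. chk (n - i) k' (i # pre)) [0..<Suc n]" using Cons.prems(1) k by simp
  ultimately have "chk (n - i) k' (i # pre)" unfolding list_all_iff by blast
  then show ?case using Cons.IH[of "n - i" k' "i # pre"] Cons.prems k by simp
qed

lemma chk_all: "chk 8 7 []"
proof -
  have "chk 8 (Suc 6) [] = list_all (\<lambda>i. chk (8 - i) 6 [i]) [0..<Suc 8]" by (rule chk.simps(2))
  also have "[0..<Suc 8] = [0,1,2,3,4,5,6,7,8]" by (simp add: upt_rec)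
  finally show ?thesis using c0 c1 c2 c3 c4 c5 c6 c7 c8 by simp
qed

lemma upper:
  assumes s: "supported {..6} p" and sm: "sum p {..6} = 8" and w: "w \<le> 6"
  shows "\<exists>q. (pebble_move EJ)\<^sup>*\<^sup>* p q \<and> 1 \<le> q w"
proof -
  define l where "l = map p [0..<7]"
  have tf: "tf l = p" using s by (auto simp: tf_def l_def supported_def)
  have "{..6::nat} = set [0..<7]" by auto
  then have "sum_list l = 8" using sm unfolding l_def by (metis sum_set_upt_conv_sum_list_nat)
  then have "list_all (\<lambda>w. reach 7 (rev (rev l) @ []) w) [0..<7]"
    using chk_ok[OF chk_all, of "rev l"] by (simp add: l_def)
  then have "reach 7 l w" using w by (simp add: list_all_iff)
  then show ?thesis using sound(1)[of 7 l w] w tf by (simp add: l_def)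
qed

lemma pn: "pebbling_number (jahangir_V 2 3) (jahangir_E 2 3) = 8"
  unfolding pebbling_number_def
proof (rule Least_equality)
  show "\<forall>p. supported (jahangir_V 2 3) p \<longrightarrow> sum p (jahangir_V 2 3) = 8 \<longrightarrow>
       (\<forall>w\<in>jahangir_V 2 3. \<exists>q. (pebble_move EJ)\<^sup>*\<^sup>* p q \<and> 1 \<le> q w)"
    using upper by (simp add: jahangir_V_def)
next
  fix y
  assume "\<forall>p. supported (jahangir_V 2 3) p \<longrightarrow> sum p (jahangir_V 2 3) = y \<longrightarrow>
       (\<forall>w\<in>jahangir_V 2 3. \<exists>q. (pebble_move EJ)\<^sup>*\<^sup>* p q \<and> 1 \<le> q w)"
  then show "8 \<le> y" using lower[of y] by (metis not_less)
qed

theorem theorem2p3: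
  fixes D :: "nat \<Rightarrow> nat"
  assumes "D = (\<lambda>x. 0)(1 := 3, 5 := 3, 0 := 1, 6 := 1)"
  shows "pebbling_number (jahangir_V 2 3) (jahangir_E 2 3) = 8
       \<and> \<not> (\<exists>q. (greedy_move (jahangir_E 2 3) 3)\<^sup>*\<^sup>* D q \<and> 1 \<le> q 3)
       \<and> \<not> greedy (jahangir_V 2 3) (jahangir_E 2 3)"
proof (intro conjI)
  show "pebbling_number (jahangir_V 2 3) (jahangir_E 2 3) = 8" by (rule pn)
  show ng: "\<not> (\<exists>q. (greedy_move (jahangir_E 2 3) 3)\<^sup>*\<^sup>* D q \<and> 1 \<le> q 3)"
    using greedy_part[OF assms] .
  have V: "jahangir_V 2 3 = {0,1,2,3,4,5,6}" by (auto simp: jahangir_V_def)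
  have sD: "supported (jahangir_V 2 3) D" using assms by (simp add: supported_def V)
  have sumD: "sum D (jahangir_V 2 3) = 8" using assms by (simp add: V)
  show "\<not> greedy (jahangir_V 2 3) (jahangir_E 2 3)"
  proof
    assume "greedy (jahangir_V 2 3) (jahangir_E 2 3)"
    then have "\<forall>w\<in>jahangir_V 2 3. \<exists>q. (greedy_move EJ w)\<^sup>*\<^sup>* D q \<and> 1 \<le> q w"
      using sD sumD pn unfolding greedy_def by simp
    then show False using ng V by auto
  qed
qed

end
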